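(* Let $\mathcal{L}$ be a distributive abstract logic and define $a\le b$ iff $S_a\subseteq S_b$ for $a,b\in Expr_{\mathcal{L}}$, where $S_a=\{P\in PTh_{\mathcal{L}}: a\in P\}$. Then $(Expr_{\mathcal{L}},\le)$ is a distributive lattice with $\inf\{a,b\}=a\wedge b$ and $\sup\{a,b\}=a\vee b$; if $\mathcal{L}$ is bounded, it is a bounded lattice with least element $\bot$ and greatest element $\top$.
   Context: An abstract logic is a triple $\mathcal{L}=(Expr_{\mathcal{L}},Th_{\mathcal{L}},\mathcal{C}_{\mathcal{L}})$ where $Expr_{\mathcal{L}}$ is a set, $Th_{\mathcal{L}}$ a non-empty set of subsets of $Expr_{\mathcal{L}}$ (theories) closed under intersections of non-empty subfamilies, and $\mathcal{C}_{\mathcal{L}}$ a set of operations on $Expr_{\mathcal{L}}$. $\mathcal{L}$ is closed under union of chains if the union of every non-empty chain of theories is a theory. A theory $T$ is prime if $T=\bigcap\mathcal{T}$ with $\mathcal{T}\subseteq Th_{\mathcal{L}}$ non-empty finite implies $T\in\mathcal{T}$; totally prime if this holds for non-empty $\mathcal{T}$ of any size. $PTh_{\mathcal{L}}$, $TPTh_{\mathcal{L}}$ denote these sets. A distributive abstract logic is one closed under union of chains with binary connectives $\vee,\wedge$ such that for all $a,b$ and all $T\in TPTh_{\mathcal{L}}$: $a\vee b\in T$ iff $a\in T$ or $b\in T$; $a\wedge b\in T$ iff $a,b\in T$. It is bounded if moreover there are formulas $\top$ belonging to every theory and $\bot$ belonging to no theory. The paper treats elements $a,b$ with $a\le b$ and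 $b\le a$ as equal (equality $=_{\le}$ induced by the order). *)

theory Defs
  imports Main
begin

text \<open>An abstract logic: expressions form the carrier set E; Th is the set of theories.
  The operation set C_L only matters through the two binary connectives Or, And.\<close>

definition abstract_logic :: "'a set \<Rightarrow> 'a set set \<Rightarrow> bool" where
  "abstract_logic E Th \<longleftrightarrow> Th \<noteq> {} \<and> (\<forall>T\<in>Th. T \<subseteq> E) \<and>
     (\<forall>\<T>. \<T> \<subseteq> Th \<and> \<T> \<noteq> {} \<longrightarrow> \<Inter>\<T> \<in> Th)"

definition closed_union_chains :: "'a set set \<Rightarrow> bool" where
  "closed_union_chains Th \<longleftrightarrow>
     (\<forall>\<C>. \<C> \<subseteq> Th \<and> \<C> \<noteq> {} \<and> (\<forall>X\<in>\<C>. \<forall>Y\<in>\<C>. X \<subseteq> Y \<or> Y \<subseteq> X) \<longrightarrow> \<Union>\<C> \<in> Th)"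

definition prime_theory :: "'a set set \<Rightarrow> 'a set \<Rightarrow> bool" where
  "prime_theory Th T \<longleftrightarrow> T \<in> Th \<and>
     (\<forall>\<T>. \<T> \<subseteq> Th \<and> \<T> \<noteq> {} \<and> finite \<T> \<and> T = \<Inter>\<T> \<longrightarrow> T \<in> \<T>)"

definition totally_prime_theory :: "'a set set \<Rightarrow> 'a set \<Rightarrow> bool" where
  "totally_prime_theory Th T \<longleftrightarrow> T \<in> Th \<and>
     (\<forall>\<T>. \<T> \<subseteq> Th \<and> \<T> \<noteq> {} \<and> T = \<Inter>\<T> \<longrightarrow> T \<in> \<T>)"

definition distributive_logic ::
  "'a set \<Rightarrow> 'a set set \<Rightarrow> ('a \<Rightarrow> 'a \<Rightarrow> 'a) \<Rightarrow> ('a \<Rightarrow> 'a \<Rightarrow> 'a) \<Rightarrow> bool" where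
  "distributive_logic E Th Or And \<longleftrightarrow>
     abstract_logic E Th \<and> closed_union_chains Th \<and>
     (\<forall>a\<in>E. \<forall>b\<in>E. Or a b \<in> E \<and> And a b \<in> E) \<and>
     (\<forall>a\<in>E. \<forall>b\<in>E. \<forall>T. totally_prime_theory Th T \<longrightarrow>
        (Or a b \<in> T \<longleftrightarrow> a \<in> T \<or> b \<in> T) \<and>
        (And a b \<in> T \<longleftrightarrow> a \<in> T \<and> b \<in> T))"

definition bounded_logic :: "'a set \<Rightarrow> 'a set set \<Rightarrow> 'a \<Rightarrow> 'a \<Rightarrow> bool" where
  "bounded_logic E Th Top Bot \<longleftrightarrow> Top \<in> E \<and> Bot \<in> E \<and>
     (\<forall>T\<in>Th. Top \<in> T \<and> Bot \<notin> T)"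

definition S_set :: "'a set set \<Rightarrow> 'a \<Rightarrow> 'a set set" where
  "S_set Th a = {P. prime_theory Th P \<and> a \<in> P}"

definition leq_L :: "'a set set \<Rightarrow> 'a \<Rightarrow> 'a \<Rightarrow> bool" where
  "leq_L Th a b \<longleftrightarrow> S_set Th a \<subseteq> S_set Th b"

end

theory Submission
  imports Defs
begin

lemma extend_tp:
  assumes cu: "closed_union_chains Th" and P: "P \<in> Th" and b: "b \<notin> P"
  shows "\<exists>Q. totally_prime_theory Th Q \<and> P \<subseteq> Q \<and> b \<notin> Q"
proof -
  let ?A = "{Q\<in>Th. P \<subseteq> Q \<and> b \<notin> Q}"
  have "\<exists>M\<in>?A. \<forall>X\<in>?A. M \<subseteq> X \<longrightarrow> X = M"
  proof (rule subset_Zorn_nonempty)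
    show "?A \<noteq> {}" using P b by blast
    fix C assume ne: "C \<noteq> {}" and ch: "subset.chain ?A C"
    from ch have CA: "C \<subseteq> ?A" and cmp: "\<forall>X\<in>C. \<forall>Y\<in>C. X \<subseteq> Y \<or> Y \<subseteq> X"
      by (auto simp: subset.chain_def)
    have "\<Union>C \<in> Th" using cu CA ne cmp unfolding closed_union_chains_def by blast
    then show "\<Union>C \<in> ?A" using CA ne by blast
  qed
  then obtain M where M: "M \<in> ?A" and mx: "\<forall>X\<in>?A. M \<subseteq> X \<longrightarrow> X = M" by blast
  have "totally_prime_theory Th M"
    unfolding totally_prime_theory_def
  proof (intro conjI allI impI)
    show "M \<in> Th" using M by blast
    fix T assume h: "T \<subseteq> Th \<and> T \<noteq> {} \<and> M = \<Inter>T"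
    show "M \<in> T"
    proof (rule ccontr)
      assume nm: "M \<notin> T"
      have "\<forall>X\<in>T. b \<in> X"
      proof
        fix X assume X: "X \<in> T"
        have "M \<subseteq> X" using h X by blast
        moreover have "X \<noteq> M" using nm X by blast
        ultimately show "b \<in> X" using mx M h X by blast
      qed
      then have "b \<in> M" using h by blast
      then show False using M by blast
    qed
  qed
  then show ?thesis using M by blast
qed

lemma tp_prime: "totally_prime_theory Th T \<Longrightarrow> prime_theory Th T"
  unfolding totally_prime_theory_def prime_theory_def by blast

lemma leq_char:
  assumes "closed_union_chains Th"
  shows "leq_L Th a b \<longleftrightarrow> (\<forall>T. totally_prime_theory Th T \<longrightarrow> a \<in> T \<longrightarrow> b \<in> T)"
proof
  assume "leq_L Th a b"
  then show "\<forall>T. totally_prime_theory Th T \<longrightarrow> a \<in> T \<longrightarrow> b \<in> T"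
    unfolding leq_L_def S_set_def using tp_prime by blast
next
  assume h: "\<forall>T. totally_prime_theory Th T \<longrightarrow> a \<in> T \<longrightarrow> b \<in> T"
  show "leq_L Th a b" unfolding leq_L_def S_set_def
  proof (rule subsetI, rule ccontr)
    fix P assume P: "P \<in> {P. prime_theory Th P \<and> a \<in> P}"
      and nb: "P \<notin> {P. prime_theory Th P \<and> b \<in> P}"
    then have "P \<in> Th" "b \<notin> P" "a \<in> P" unfolding prime_theory_def by auto
    then obtain Q where "totally_prime_theory Th Q" "P \<subseteq> Q" "b \<notin> Q"
      using extend_tp[OF assms] by blast
    then show False using h \<open>a \<in> P\<close> by blast
  qed
qed

theorem lemma3p6:
  assumes "distributive_logic E Th Or And"
  shows "(\<forall>a\<in>E. leq_L Th a a)
    \<and> (\<forall>a\<in>E. \<forall>b\<in>E. \<forall>c\<in>E. leq_L Th a b \<and> leq_L Th b c \<longrightarrow> leq_L Th a c)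
    \<and> (\<forall>a\<in>E. \<forall>b\<in>E. leq_L Th (And a b) a \<and> leq_L Th (And a b) b \<and>
         (\<forall>c\<in>E. leq_L Th c a \<and> leq_L Th c b \<longrightarrow> leq_L Th c (And a b)))
    \<and> (\<forall>a\<in>E. \<forall>b\<in>E. leq_L Th a (Or a b) \<and> leq_L Th b (Or a b) \<and>
         (\<forall>c\<in>E. leq_L Th a c \<and> leq_L Th b c \<longrightarrow> leq_L Th (Or a b) c))
    \<and> (\<forall>a\<in>E. \<forall>b\<in>E. \<forall>c\<in>E.
         leq_L Th (And a (Or b c)) (Or (And a b) (And a c)) \<and>
         leq_L Th (Or (And a b) (And a c)) (And a (Or b c)))
    \<and> (\<forall>Top Bot. bounded_logic E Th Top Bot \<longrightarrow>
         (\<forall>a\<in>E. leq_L Th Bot a \<and> leq_L Th a Top))"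
proof -
  have cu: "closed_union_chains Th" and cl: "\<forall>a\<in>E. \<forall>b\<in>E. Or a b \<in> E \<and> And a b \<in> E"
    and op: "\<forall>a\<in>E. \<forall>b\<in>E. \<forall>T. totally_prime_theory Th T \<longrightarrow>
        (Or a b \<in> T \<longleftrightarrow> a \<in> T \<or> b \<in> T) \<and> (And a b \<in> T \<longleftrightarrow> a \<in> T \<and> b \<in> T)"
    using assms unfolding distributive_logic_def by auto
  note lc = leq_char[OF cu]
  have bd: "\<forall>a\<in>E. leq_L Th Bot a \<and> leq_L Th a Top" if "bounded_logic E Th Top Bot" for Top Bot
    using that unfolding bounded_logic_def lc totally_prime_theory_def by blast
  have d: "\<forall>a\<in>E. \<forall>b\<in>E. \<forall>c\<in>E.
         leq_L Th (And a (Or b c)) (Or (And a b) (And a c)) \<and>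
         leq_L Th (Or (And a b) (And a c)) (And a (Or b c))"
  proof (intro ballI)
    fix a b c assume abc: "a \<in> E" "b \<in> E" "c \<in> E"
    have e: "Or b c \<in> E" "And a b \<in> E" "And a c \<in> E" using cl abc by auto
    have "\<And>T. totally_prime_theory Th T \<Longrightarrow>
        (And a (Or b c) \<in> T \<longleftrightarrow> Or (And a b) (And a c) \<in> T)"
    proof -
      fix T assume T: "totally_prime_theory Th T"
      have "And a (Or b c) \<in> T \<longleftrightarrow> a \<in> T \<and> (b \<in> T \<or> c \<in> T)"
        using op abc e T by simp
      moreover have "Or (And a b) (And a c) \<in> T \<longleftrightarrow> (a \<in> T \<and> b \<in> T) \<or> (a \<in> T \<and> c \<in> T)"
        using op abc e T by simp
      ultimately show "And a (Or b c) \<in> T \<longleftrightarrow> Or (And a b) (And a c) \<in> T" by blast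
    qed
    then show "leq_L Th (And a (Or b c)) (Or (And a b) (And a c)) \<and>
         leq_L Th (Or (And a b) (And a c)) (And a (Or b c))"
      unfolding lc by blast
  qed
  have r: "\<forall>a\<in>E. leq_L Th a a" unfolding lc by blast
  have t: "\<forall>a\<in>E. \<forall>b\<in>E. \<forall>c\<in>E. leq_L Th a b \<and> leq_L Th b c \<longrightarrow> leq_L Th a c"
    unfolding lc by blast
  have m: "\<forall>a\<in>E. \<forall>b\<in>E. leq_L Th (And a b) a \<and> leq_L Th (And a b) b \<and>
         (\<forall>c\<in>E. leq_L Th c a \<and> leq_L Th c b \<longrightarrow> leq_L Th c (And a b))"
    unfolding lc using op by simp
  have j: "\<forall>a\<in>E. \<forall>b\<in>E. leq_L Th a (Or a b) \<and> leq_L Th b (Or a b) \<and>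
         (\<forall>c\<in>E. leq_L Th a c \<and> leq_L Th b c \<longrightarrow> leq_L Th (Or a b) c)"
    unfolding lc using op by simp
  show ?thesis using r t m j d bd by blast
qed

end
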